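(* Let $\mathbb{K}$ be a field of characteristic different from $2$, with algebraic closure $\overline{\mathbb{K}}$. (a) If $\lambda = \alpha+\beta\in\overline{\mathbb{K}}$ with $\alpha\in\mathbb{K}$, $\beta\in Ker(H_\mathbb{K})$, has degree $2$ over $\mathbb{K}$, then the unique conjugate of $\lambda$ over $\mathbb{K}$ (other than $\lambda$) is its $\mathbb{K}$-involution $\overline{\lambda}=\alpha-\beta$. (b) If $\theta_1,\dots,\theta_l\in\overline{\mathbb{K}}$ are algebraic over $\mathbb{K}$ of degree at most $2$, then $\mathbb{K}(\theta_1,\dots,\theta_l)\subseteq\mathcal{R}_\mathbb{K}$ and $\overline{\theta_1+\cdots+\theta_l} = \overline{\theta_1}+\cdots+\overline{\theta_l}$. (c) If $\lambda\in\overline{\mathbb{K}}$ has degree at most $2$ over $\mathbb{K}$, then $\overline{xy}=\overline{x}\,\overline{y}$ for all $x,y\in\mathbb{K}(\lambda)$. (d) If $\beta,\beta'\in Ker(H_\mathbb{K})$ have degree $2$ over $\mathbb{K}$, then $\beta\beta'\in\mathbb{K}$ if and only if $\beta,\beta'$ are linearly dependent over $\mathbb{K}$; otherwise $\beta\beta'$ has degree $2$ over $\mathbb{K}$ and belongs to $Ker(H_\mathbb{K})$. (e) If $\beta\in\overline{\mathbb{K}}$ has degree $2$ over $\mathbb{K}$, then $\beta\in Ker(H_\mathbb{K})$ if and only if $\beta\notin\mathbb{K}$ and $\beta^2\in\mathbb{K}$.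
   Context: An element of $\overline{\mathbb{K}}$ is $\mathbb{K}$-regular if its degree over $\mathbb{K}$ is not a multiple of $char(\mathbb{K})$; $\mathcal{R}_\mathbb{K}$ is the set of such elements. For $\lambda\in\mathcal{R}_\mathbb{K}$ with monic minimal polynomial $X^d + a_{d-1}X^{d-1}+\cdots+a_0$ over $\mathbb{K}$, $H_\mathbb{K}(\lambda) = -a_{d-1}/d\in\mathbb{K}$, $V_\mathbb{K}(\lambda)=\lambda-H_\mathbb{K}(\lambda)$, and $Ker(H_\mathbb{K})=\{\lambda\in\mathcal{R}_\mathbb{K}: H_\mathbb{K}(\lambda)=0\}$. Every $\lambda\in\mathcal{R}_\mathbb{K}$ is uniquely $\lambda=\alpha+\beta$ with $\alpha\in\mathbb{K}$, $\beta\in Ker(H_\mathbb{K})$ (namely $\alpha=H_\mathbb{K}(\lambda)$, $\beta=V_\mathbb{K}(\lambda)$); the $\mathbb{K}$-involution of $\lambda$ is $\overline{\lambda}=\alpha-\beta$. *)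

theory Defs
  imports "HOL-Algebra.Algebraic_Closure_Type" "HOL-Computational_Algebra.Polynomial"
begin

text \<open>The base field K is a type 'k :: field; its algebraic closure is 'k alg_closure,
  with K embedded via to_ac.  So "x in K" means "x in range to_ac".\<close>

definition min_poly :: "'k :: field alg_closure \<Rightarrow> 'k poly" where
  "min_poly x = (THE p. lead_coeff p = 1 \<and> poly (map_poly to_ac p) x = 0 \<and>
      (\<forall>q. q \<noteq> 0 \<and> poly (map_poly to_ac q) x = 0 \<longrightarrow> degree p \<le> degree q))"

definition deg_over :: "'k :: field alg_closure \<Rightarrow> nat" where
  "deg_over x = degree (min_poly x)"

definition regular :: "'k :: field alg_closure \<Rightarrow> bool" where
  "regular x \<longleftrightarrow> \<not> (CHAR('k) dvd deg_over x)"

definition H :: "'k :: field alg_closure \<Rightarrow> 'k" where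
  "H x = - coeff (min_poly x) (deg_over x - 1) / of_nat (deg_over x)"

definition V :: "'k :: field alg_closure \<Rightarrow> 'k alg_closure" where
  "V x = x - to_ac (H x)"

definition KerH :: "'k :: field alg_closure set" where
  "KerH = {x. regular x \<and> H x = 0}"

definition invol :: "'k :: field alg_closure \<Rightarrow> 'k alg_closure" where
  "invol x = to_ac (H x) - V x"

definition subfield :: "'a :: field set \<Rightarrow> bool" where
  "subfield F \<longleftrightarrow> 0 \<in> F \<and> 1 \<in> F \<and> (\<forall>x\<in>F. \<forall>y\<in>F. x + y \<in> F \<and> x * y \<in> F \<and> x - y \<in> F)
     \<and> (\<forall>x\<in>F. -x \<in> F \<and> inverse x \<in> F)"

definition gen_field :: "'k :: field alg_closure set \<Rightarrow> 'k alg_closure set" where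
  "gen_field S = \<Inter>{F. subfield F \<and> range to_ac \<subseteq> F \<and> S \<subseteq> F}"

definition lin_dep2 :: "'k :: field alg_closure \<Rightarrow> 'k alg_closure \<Rightarrow> bool" where
  "lin_dep2 x y \<longleftrightarrow> (\<exists>a b :: 'k. (a \<noteq> 0 \<or> b \<noteq> 0) \<and> to_ac a * x + to_ac b * y = 0)"

end

theory Submission imports Defs begin

lemma map_to_ac_nz: "map_poly to_ac p = 0 \<longleftrightarrow> p = 0"
  by (intro map_poly_eq_0_iff) auto

lemma degree_map_to_ac [simp]: "degree (map_poly to_ac p) = degree p"
  by (rule degree_map_poly) auto

lemma coeff_map_to_ac [simp]: "coeff (map_poly to_ac p) n = to_ac (coeff p n)"
  by (simp add: coeff_map_poly)

lemma eval_eq: "poly (map_poly to_ac p) x = (\<Sum>i\<le>degree p. to_ac (coeff p i) * x^i)"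
  by (simp add: poly_altdef)

lemma eval_diff: "poly (map_poly to_ac (p - q)) x = poly (map_poly to_ac p) x - poly (map_poly to_ac q) x"
proof -
  have "map_poly to_ac (p - q) = map_poly to_ac p - map_poly to_ac q"
    by (intro poly_eqI) simp
  then show ?thesis by simp
qed

lemma eval_smult: "poly (map_poly to_ac (smult c p)) x = to_ac c * poly (map_poly to_ac p) x"
proof -
  have "map_poly to_ac (smult c p) = smult (to_ac c) (map_poly to_ac p)"
    by (intro poly_eqI) simp
  then show ?thesis by simp
qed

lemma min_poly_eqI:
  assumes "lead_coeff p = 1" "poly (map_poly to_ac p) x = 0"
    "\<forall>q. q \<noteq> 0 \<and> poly (map_poly to_ac q) x = 0 \<longrightarrow> degree p \<le> degree q"
  shows "min_poly x = p"
  unfolding min_poly_def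
proof (rule the_equality)
  show "lead_coeff p = 1 \<and> poly (map_poly to_ac p) x = 0 \<and>
      (\<forall>q. q \<noteq> 0 \<and> poly (map_poly to_ac q) x = 0 \<longrightarrow> degree p \<le> degree q)" using assms by blast
next
  fix p' assume H: "lead_coeff p' = 1 \<and> poly (map_poly to_ac p') x = 0 \<and>
      (\<forall>q. q \<noteq> 0 \<and> poly (map_poly to_ac q) x = 0 \<longrightarrow> degree p' \<le> degree q)"
  have p0: "p \<noteq> 0" "p' \<noteq> 0" using assms H by auto
  have dd: "degree p' = degree p" using assms H p0 by (meson antisym)
  show "p' = p"
  proof (rule ccontr)
    assume ne: "p' \<noteq> p"
    let ?r = "p' - p"
    have r0: "?r \<noteq> 0" using ne by simp
    have ev: "poly (map_poly to_ac ?r) x = 0" using assms H by (simp add: eval_diff)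
    have "degree ?r \<le> degree p" using degree_diff_le_max[of p' p] dd by simp
    moreover have "coeff ?r (degree p) = 0" using assms H dd by simp
    ultimately have "degree ?r < degree p" using r0
      by (metis le_neq_implies_less leading_coeff_0_iff)
    moreover have "degree p \<le> degree ?r" using assms(3) r0 ev by blast
    ultimately show False by linarith
  qed
qed

lemma min_poly_props:
  fixes x :: "'k::field alg_closure"
  shows "lead_coeff (min_poly x) = 1 \<and> poly (map_poly to_ac (min_poly x)) x = 0 \<and>
      (\<forall>q. q \<noteq> 0 \<and> poly (map_poly to_ac q) x = 0 \<longrightarrow> degree (min_poly x) \<le> degree q)"
proof -
  obtain p :: "'k poly" where p: "p \<noteq> 0" "poly (map_poly to_ac p) x = 0"
    using alg_closure_algebraic by blast
  define P where "P = (\<lambda>n. \<exists>q::'k poly. q \<noteq> 0 \<and> poly (map_poly to_ac q) x = 0 \<and> degree q = n)"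
  have "P (degree p)" using p P_def by blast
  define n0 where "n0 = (LEAST n. P n)"
  have "P n0" unfolding n0_def by (rule LeastI) fact
  then obtain q where q: "q \<noteq> 0" "poly (map_poly to_ac q) x = 0" "degree q = n0"
    unfolding P_def by blast
  define p0 where "p0 = smult (inverse (lead_coeff q)) q"
  have l: "lead_coeff p0 = 1" using q(1) by (simp add: p0_def)
  have e: "poly (map_poly to_ac p0) x = 0" using q by (simp add: p0_def eval_smult)
  have m: "\<forall>r. r \<noteq> 0 \<and> poly (map_poly to_ac r) x = 0 \<longrightarrow> degree p0 \<le> degree r"
  proof (intro allI impI)
    fix r :: "'k poly" assume "r \<noteq> 0 \<and> poly (map_poly to_ac r) x = 0"
    then have "P (degree r)" unfolding P_def by blast
    then have "n0 \<le> degree r" unfolding n0_def by (rule Least_le)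
    then show "degree p0 \<le> degree r" using q by (simp add: p0_def)
  qed
  have "min_poly x = p0" by (rule min_poly_eqI[OF l e m])
  then show ?thesis using l e m by simp
qed

definition inv_ok :: "'k::field alg_closure set \<Rightarrow> ('k alg_closure \<Rightarrow> 'k alg_closure) set \<Rightarrow> bool" where
  "inv_ok F G \<longleftrightarrow> subfield F \<and> range to_ac \<subseteq> F \<and> finite G \<and> id \<in> G \<and> (\<exists>r. card G = 2^r) \<and>
    (\<forall>g\<in>G. \<forall>z. z \<notin> F \<longrightarrow> g z = z) \<and> (\<forall>g\<in>G. \<forall>z\<in>F. g z \<in> F) \<and>
    (\<forall>g\<in>G. \<forall>a\<in>F. \<forall>b\<in>F. g (a + b) = g a + g b \<and> g (a * b) = g a * g b) \<and>
    (\<forall>g\<in>G. \<forall>k. g (to_ac k) = to_ac k) \<and> (\<forall>g\<in>G. \<forall>h\<in>G. g \<circ> h \<in> G) \<and> (\<forall>g\<in>G. g \<circ> g = id) \<and>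
    (\<forall>z\<in>F. (\<forall>g\<in>G. g z = z) \<longrightarrow> z \<in> range to_ac)"

lemma subfield_range_to_ac: "subfield (range to_ac :: 'k::field alg_closure set)"
  unfolding subfield_def
  by (auto simp flip: to_ac_add to_ac_mult to_ac_diff to_ac_minus to_ac_inverse to_ac_0 to_ac_1)

lemma inv_ok_base: "inv_ok (range to_ac :: 'k::field alg_closure set) {id}"
proof -
  have ex: "\<exists>r. card {id::'k alg_closure \<Rightarrow> 'k alg_closure} = 2^r" by (rule exI[of _ 0]) simp
  show ?thesis unfolding inv_ok_def using subfield_range_to_ac ex by auto
qed

context
  fixes F :: "'k::field alg_closure set" and G
  assumes I: "inv_ok F G"
begin

lemma I_sub: "subfield F" using I unfolding inv_ok_def by blast
lemma I_K: "to_ac k \<in> F" using I unfolding inv_ok_def by blast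
lemma I_fin: "finite G" using I unfolding inv_ok_def by blast
lemma I_id: "id \<in> G" using I unfolding inv_ok_def by blast
lemma I_card: "\<exists>r. card G = 2^r" using I unfolding inv_ok_def by blast
lemma I_out: "g \<in> G \<Longrightarrow> z \<notin> F \<Longrightarrow> g z = z" using I unfolding inv_ok_def by blast
lemma I_in: "g \<in> G \<Longrightarrow> z \<in> F \<Longrightarrow> g z \<in> F" using I unfolding inv_ok_def by blast
lemma I_add: "g \<in> G \<Longrightarrow> a \<in> F \<Longrightarrow> b \<in> F \<Longrightarrow> g (a + b) = g a + g b" using I unfolding inv_ok_def by blast
lemma I_mult: "g \<in> G \<Longrightarrow> a \<in> F \<Longrightarrow> b \<in> F \<Longrightarrow> g (a * b) = g a * g b" using I unfolding inv_ok_def by blast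
lemma I_K_fix: "g \<in> G \<Longrightarrow> g (to_ac k) = to_ac k" using I unfolding inv_ok_def by blast
lemma I_comp: "g \<in> G \<Longrightarrow> h \<in> G \<Longrightarrow> g \<circ> h \<in> G" using I unfolding inv_ok_def by blast
lemma I_invol: "g \<in> G \<Longrightarrow> g (g z) = z" using I unfolding inv_ok_def by (metis comp_apply id_apply)
lemma I_fix: "z \<in> F \<Longrightarrow> (\<And>g. g \<in> G \<Longrightarrow> g z = z) \<Longrightarrow> z \<in> range to_ac" using I unfolding inv_ok_def by blast

lemma F_add: "a \<in> F \<Longrightarrow> b \<in> F \<Longrightarrow> a + b \<in> F" using I_sub unfolding subfield_def by blast
lemma F_mult: "a \<in> F \<Longrightarrow> b \<in> F \<Longrightarrow> a * b \<in> F" using I_sub unfolding subfield_def by blast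
lemma F_diff: "a \<in> F \<Longrightarrow> b \<in> F \<Longrightarrow> a - b \<in> F" using I_sub unfolding subfield_def by blast
lemma F_uminus: "a \<in> F \<Longrightarrow> - a \<in> F" using I_sub unfolding subfield_def by blast
lemma F_0: "0 \<in> F" using I_sub unfolding subfield_def by blast
lemma F_1: "1 \<in> F" using I_sub unfolding subfield_def by blast

lemma g0: "g \<in> G \<Longrightarrow> g 0 = 0" using I_K_fix[of g 0] by simp
lemma g_uminus: "g \<in> G \<Longrightarrow> a \<in> F \<Longrightarrow> g (- a) = - g a"
  using I_add[of g a "-a"] F_uminus[of a] g0[of g] by (simp add: add_eq_0_iff)
lemma g_diff: "g \<in> G \<Longrightarrow> a \<in> F \<Longrightarrow> b \<in> F \<Longrightarrow> g (a - b) = g a - g b"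
  using I_add[of g a "-b"] F_uminus[of b] g_uminus[of g b] by simp
lemma g_inj: "g \<in> G \<Longrightarrow> inj g" by (metis I_invol injI)

lemma F_sum: "finite A \<Longrightarrow> (\<And>i. i \<in> A \<Longrightarrow> f i \<in> F) \<Longrightarrow> sum f A \<in> F"
  by (induction A rule: finite_induct) (auto intro: F_add F_0)

lemma g_sum: assumes gG: "g \<in> G" shows "finite A \<Longrightarrow> (\<And>i. i \<in> A \<Longrightarrow> f i \<in> F) \<Longrightarrow> g (sum f A) = (\<Sum>i\<in>A. g (f i))"
proof (induction A rule: finite_induct)
  case empty then show ?case using g0 gG by simp
next
  case (insert a A)
  have fa: "f a \<in> F" using insert.prems by simp
  have sA: "sum f A \<in> F" using insert.hyps(1) insert.prems by (intro F_sum) auto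
  show ?case using insert.hyps insert.IH insert.prems by (simp add: I_add[OF gG fa sA])
qed

lemma eval_in_F: "y \<in> F \<Longrightarrow> poly (map_poly to_ac p) y \<in> F \<and>
   (\<forall>g\<in>G. g (poly (map_poly to_ac p) y) = poly (map_poly to_ac p) (g y))"
proof (induction p rule: pCons_induct)
  case 0 then show ?case using F_0 g0 by simp
next
  case (pCons a p)
  have e: "poly (map_poly to_ac (pCons a p)) z = to_ac a + z * poly (map_poly to_ac p) z" for z
    by (simp add: map_poly_pCons)
  have yP: "y * poly (map_poly to_ac p) y \<in> F" using pCons F_mult by blast
  have "g (to_ac a + y * poly (map_poly to_ac p) y) = to_ac a + g y * poly (map_poly to_ac p) (g y)"
    if "g \<in> G" for g
  proof -
    have P: "poly (map_poly to_ac p) y \<in> F" using pCons by blast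
    have "g (to_ac a + y * poly (map_poly to_ac p) y) = g (to_ac a) + g (y * poly (map_poly to_ac p) y)"
      by (rule I_add[OF that I_K yP])
    also have "\<dots> = to_ac a + g y * g (poly (map_poly to_ac p) y)"
      using I_K_fix[OF that] I_mult[OF that pCons.prems P] by simp
    finally show ?thesis using pCons that by simp
  qed
  then show ?case unfolding e using yP I_K F_add by blast
qed

end

definition lin_prod :: "'a::field set \<Rightarrow> 'a poly" where
  "lin_prod S = (\<Prod>y\<in>S. [:-y, 1:])"

lemma coeff_lin_mult: "coeff ([:-a, 1:] * P) n = (if n = 0 then 0 else coeff P (n - 1)) - a * coeff P n"
  for a :: "'a::comm_ring_1"
  by (cases n) simp_all
lemma lin_prod_props:
  assumes "finite S"
  shows "degree (lin_prod S) = card S \<and> coeff (lin_prod S) (card S) = 1 \<and>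
    (S \<noteq> {} \<longrightarrow> coeff (lin_prod S) (card S - 1) = - (\<Sum>y\<in>S. y))"
  using assms
proof (induction S rule: finite_induct)
  case empty then show ?case by (simp add: lin_prod_def)
next
  case (insert a S)
  let ?P = "lin_prod S"
  have e: "lin_prod (insert a S) = [:-a, 1:] * ?P" using insert.hyps by (simp add: lin_prod_def)
  have P0: "?P \<noteq> 0" using insert.IH by auto
  have "degree ([:-a, 1:] * ?P) = degree [:-a, 1:] + degree ?P" by (rule degree_mult_eq) (use P0 in auto)
  then have d: "degree (lin_prod (insert a S)) = card (insert a S)"
    unfolding e using insert.hyps insert.IH by simp
  have c1: "coeff (lin_prod (insert a S)) (card (insert a S)) = 1"
    unfolding e coeff_lin_mult using insert.hyps insert.IH by (simp add: coeff_eq_0)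
  have c2: "coeff (lin_prod (insert a S)) (card (insert a S) - 1) = - (\<Sum>y\<in>insert a S. y)"
  proof (cases "S = {}")
    case True then show ?thesis by (simp add: lin_prod_def)
  next
    case False
    then have "card S > 0" using insert.hyps by (simp add: card_gt_0_iff)
    then show ?thesis unfolding e coeff_lin_mult using insert.hyps insert.IH False by simp
  qed
  show ?case using d c1 c2 by simp
qed

lemma poly_lin_prod: "finite S \<Longrightarrow> poly (lin_prod S) z = 0 \<longleftrightarrow> z \<in> S"
  by (simp add: lin_prod_def poly_prod)

lemma two_pow_nz:
  assumes "CHAR('k::field) \<noteq> 2"
  shows "(of_nat (2^r) :: 'k) \<noteq> 0"
proof -
  have "(2::'k) \<noteq> 0"
  proof
    assume "(2::'k) = 0"
    then have "(of_nat 2 :: 'k) = 0" by simp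
    then have "CHAR('k) dvd 2" by (simp only: of_nat_eq_0_iff_char_dvd)
    moreover have "CHAR('k) \<noteq> 0" using calculation by (metis dvd_0_left_iff zero_neq_numeral)
    ultimately have "CHAR('k) \<le> 2" "CHAR('k) \<noteq> 0" by (auto dest: dvd_imp_le)
    then have "CHAR('k) = 1 \<or> CHAR('k) = 2" by linarith
    with assms show False by simp
  qed
  then show ?thesis by simp
qed

context
  fixes F :: "'k::field alg_closure set" and G
  assumes I: "inv_ok F G"
begin

lemma lin_prod_in_F:
  assumes "finite S" "S \<subseteq> F"
  shows "(\<forall>n. coeff (lin_prod S) n \<in> F) \<and> (\<forall>g\<in>G. map_poly g (lin_prod S) = (\<Prod>y\<in>S. [:- g y, 1:]))"
  using assms
proof (induction S rule: finite_induct)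
  case empty
  have "g 1 = 1" if "g \<in> G" for g using I_K_fix[OF I that, of 1] by simp
  then show ?case using F_0[OF I] F_1[OF I] g0[OF I] by (simp add: lin_prod_def coeff_1)
next
  case (insert a S)
  let ?P = "lin_prod S"
  have e: "lin_prod (insert a S) = [:-a, 1:] * ?P" using insert.hyps by (simp add: lin_prod_def)
  have aF: "a \<in> F" using insert.prems by simp
  have cP: "\<And>n. coeff ?P n \<in> F" using insert by simp
  have cF: "coeff (lin_prod (insert a S)) n \<in> F" for n
    unfolding e coeff_lin_mult using cP aF F_0[OF I] F_mult[OF I] F_diff[OF I] by simp
  have mg: "map_poly g (lin_prod (insert a S)) = (\<Prod>y\<in>insert a S. [:- g y, 1:])" if g: "g \<in> G" for g
  proof -
    have IH: "map_poly g ?P = (\<Prod>y\<in>S. [:- g y, 1:])" using insert g by simp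
    have "map_poly g ([:-a, 1:] * ?P) = [:- g a, 1:] * map_poly g ?P"
    proof (rule poly_eqI)
      fix n
      have A: "g (if n = 0 then 0 else coeff ?P (n - 1)) = (if n = 0 then 0 else g (coeff ?P (n - 1)))"
        using g0[OF I g] by simp
      have B: "(if n = 0 then 0 else coeff ?P (n - 1)) \<in> F" using cP F_0[OF I] by simp
      have "g ((if n = 0 then 0 else coeff ?P (n - 1)) - a * coeff ?P n) =
            (if n = 0 then 0 else g (coeff ?P (n - 1))) - g a * g (coeff ?P n)"
        using g_diff[OF I g B F_mult[OF I aF cP]] I_mult[OF I g aF cP] A by simp
      then show "coeff (map_poly g ([:-a, 1:] * ?P)) n = coeff ([:- g a, 1:] * map_poly g ?P) n"
        unfolding coeff_lin_mult[of "g a"] coeff_map_poly[of g, OF g0[OF I g]]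
        by (simp only: coeff_lin_mult diff_conv_add_uminus[symmetric])
    qed
    then show ?thesis unfolding e IH using insert.hyps by simp
  qed
  show ?case using cF mg by blast
qed

end

context
  fixes F :: "'k::field alg_closure set" and G
  assumes I: "inv_ok F G"
begin

lemma orbit_main:
  assumes xF: "x \<in> F"
  defines "Orb \<equiv> (\<lambda>g. g x) ` G"
  shows "deg_over x = card Orb \<and> to_ac (H x) = (\<Sum>y\<in>Orb. y) / of_nat (card Orb) \<and> x \<in> Orb \<and> finite Orb
     \<and> card G = card Orb * card {g\<in>G. g x = x}
     \<and> (\<Sum>g\<in>G. g x) = of_nat (card {g\<in>G. g x = x}) * (\<Sum>y\<in>Orb. y)"
proof -
  have finO: "finite Orb" unfolding Orb_def using I_fin[OF I] by simp
  have xO: "x \<in> Orb" unfolding Orb_def using I_id[OF I] by (metis id_apply image_eqI)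
  have OF: "Orb \<subseteq> F" unfolding Orb_def using I_in[OF I] xF by blast
  have hO: "h ` Orb = Orb" if h: "h \<in> G" for h
  proof
    show "h ` Orb \<subseteq> Orb"
    proof
      fix z assume "z \<in> h ` Orb"
      then obtain g where g: "g \<in> G" "z = h (g x)" unfolding Orb_def by blast
      then have "z = (h \<circ> g) x" by simp
      then show "z \<in> Orb" unfolding Orb_def using I_comp[OF I h g(1)] by blast
    qed
    show "Orb \<subseteq> h ` Orb"
    proof
      fix y assume "y \<in> Orb"
      then obtain g where g: "g \<in> G" "y = g x" unfolding Orb_def by blast
      have "h (g x) = (h \<circ> g) x" by simp
      then have "h (g x) \<in> Orb" unfolding Orb_def using I_comp[OF I h g(1)] by blast
      moreover have "y = h (h (g x))" using I_invol[OF I h] g by simp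
      ultimately show "y \<in> h ` Orb" by blast
    qed
  qed
  define Q where "Q = lin_prod Orb"
  have LP: "degree Q = card Orb \<and> coeff Q (card Orb) = 1 \<and> (Orb \<noteq> {} \<longrightarrow> coeff Q (card Orb - 1) = - (\<Sum>y\<in>Orb. y))"
    unfolding Q_def by (rule lin_prod_props[OF finO])
  have LF: "(\<forall>n. coeff Q n \<in> F) \<and> (\<forall>g\<in>G. map_poly g Q = (\<Prod>y\<in>Orb. [:- g y, 1:]))"
    unfolding Q_def by (rule lin_prod_in_F[OF I finO OF])
  have QK: "coeff Q n \<in> range to_ac" for n
  proof (rule I_fix[OF I])
    show "coeff Q n \<in> F" using LF by blast
    fix h assume h: "h \<in> G"
    have "map_poly h Q = (\<Prod>y\<in>Orb. [:- h y, 1:])" using LF h by blast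
    also have "\<dots> = (\<Prod>y\<in>h ` Orb. [:- y, 1:])"
      by (rule prod.reindex[symmetric, unfolded comp_def]) (meson g_inj[OF I h] inj_on_subset subset_UNIV)
    also have "\<dots> = Q" unfolding hO[OF h] Q_def lin_prod_def ..
    finally have "coeff (map_poly h Q) n = coeff Q n" by simp
    then show "h (coeff Q n) = coeff Q n" by (simp add: coeff_map_poly g0[OF I h])
  qed
  define q where "q = map_poly of_ac Q"
  have qQ: "map_poly to_ac q = Q"
    unfolding q_def by (intro poly_eqI) (simp add: coeff_map_poly to_ac_of_ac[OF QK])
  have dq: "degree q = card Orb" using LP qQ by (metis degree_map_to_ac)
  have lq: "lead_coeff q = 1"
  proof -
    have "to_ac (coeff q (card Orb)) = 1" using LP qQ by (metis coeff_map_to_ac)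
    then show ?thesis using dq by (metis to_ac_1 to_ac_eq_iff)
  qed
  have vq: "poly (map_poly to_ac q) x = 0" unfolding qQ Q_def using poly_lin_prod[OF finO] xO by blast
  have mq: "\<forall>r. r \<noteq> 0 \<and> poly (map_poly to_ac r) x = 0 \<longrightarrow> degree q \<le> degree r"
  proof (intro allI impI)
    fix r :: "'k poly" assume r: "r \<noteq> 0 \<and> poly (map_poly to_ac r) x = 0"
    have "Orb \<subseteq> {z. poly (map_poly to_ac r) z = 0}"
    proof
      fix y assume "y \<in> Orb"
      then obtain g where g: "g \<in> G" "y = g x" unfolding Orb_def by blast
      have "poly (map_poly to_ac r) (g x) = g (poly (map_poly to_ac r) x)"
        using eval_in_F[OF I xF, of r] g by simp
      then show "y \<in> {z. poly (map_poly to_ac r) z = 0}" using r g g0[OF I] by simp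
    qed
    moreover have nz: "map_poly to_ac r \<noteq> 0" using r map_to_ac_nz by blast
    ultimately have "card Orb \<le> card {z. poly (map_poly to_ac r) z = 0}"
      by (intro card_mono poly_roots_finite) auto
    also have "\<dots> \<le> degree r" using card_poly_roots_bound[OF nz] by simp
    finally show "degree q \<le> degree r" using dq by simp
  qed
  have mp: "min_poly x = q" by (rule min_poly_eqI[OF lq vq mq])
  have dx: "deg_over x = card Orb" unfolding deg_over_def mp dq ..
  have Hx: "to_ac (H x) = (\<Sum>y\<in>Orb. y) / of_nat (card Orb)"
  proof -
    have "to_ac (coeff q (card Orb - 1)) = - (\<Sum>y\<in>Orb. y)" using LP qQ xO by (metis coeff_map_to_ac empty_iff)
    then show ?thesis unfolding H_def dx mp by simp
  qed
  define fib where "fib = (\<lambda>y. {g\<in>G. g x = y})"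
  have cfib: "card (fib y) = card (fib x)" if y: "y \<in> Orb" for y
  proof -
    obtain g0 where g0: "g0 \<in> G" "y = g0 x" using y unfolding Orb_def by blast
    have "bij_betw (\<lambda>g. g0 \<circ> g) (fib x) (fib y)"
    proof (rule bij_betw_byWitness[where f' = "\<lambda>g. g0 \<circ> g"])
      show "\<forall>a\<in>fib x. g0 \<circ> (g0 \<circ> a) = a" using I_invol[OF I g0(1)] by (auto simp: fun_eq_iff)
      show "\<forall>a\<in>fib y. g0 \<circ> (g0 \<circ> a) = a" using I_invol[OF I g0(1)] by (auto simp: fun_eq_iff)
      show "(\<lambda>g. g0 \<circ> g) ` fib x \<subseteq> fib y" unfolding fib_def using I_comp[OF I g0(1)] g0 by auto
      show "(\<lambda>g. g0 \<circ> g) ` fib y \<subseteq> fib x" unfolding fib_def using I_comp[OF I g0(1)] g0 I_invol[OF I g0(1)] by auto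
    qed
    then show ?thesis by (simp add: bij_betw_same_card)
  qed
  have cG: "card G = card Orb * card (fib x)"
  proof -
    have "card G = (\<Sum>g\<in>G. 1)" by simp
    also have "\<dots> = (\<Sum>y\<in>Orb. \<Sum>g\<in>fib y. 1)" unfolding Orb_def fib_def
      by (rule sum.image_gen[OF I_fin[OF I]])
    also have "\<dots> = (\<Sum>y\<in>Orb. card (fib x))" using cfib by simp
    finally show ?thesis by simp
  qed
  have sG: "(\<Sum>g\<in>G. g x) = of_nat (card (fib x)) * (\<Sum>y\<in>Orb. y)"
  proof -
    have "(\<Sum>g\<in>G. g x) = (\<Sum>y\<in>Orb. \<Sum>g\<in>fib y. g x)" unfolding Orb_def fib_def
      by (rule sum.image_gen[OF I_fin[OF I]])
    also have "\<dots> = (\<Sum>y\<in>Orb. of_nat (card (fib x)) * y)"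
    proof (rule sum.cong[OF refl])
      fix y assume "y \<in> Orb"
      have "(\<Sum>g\<in>fib y. g x) = (\<Sum>g\<in>fib y. y)" unfolding fib_def by simp
      also have "\<dots> = of_nat (card (fib y)) * y" by simp
      finally show "(\<Sum>g\<in>fib y. g x) = of_nat (card (fib x)) * y" using cfib \<open>y \<in> Orb\<close> by simp
    qed
    finally show ?thesis by (simp add: sum_distrib_left)
  qed
  show ?thesis using dx Hx xO finO cG sG unfolding fib_def by blast
qed

lemma orbit_H:
  assumes xF: "x \<in> F" and ch: "CHAR('k) \<noteq> 2"
  shows "to_ac (H x) = (\<Sum>g\<in>G. g x) / of_nat (card G)" and "regular x"
proof -
  define Orb where "Orb = (\<lambda>g. g x) ` G"
  define s where "s = card {g\<in>G. g x = x}"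
  have M: "deg_over x = card Orb" "to_ac (H x) = (\<Sum>y\<in>Orb. y) / of_nat (card Orb)"
     "card G = card Orb * s" "(\<Sum>g\<in>G. g x) = of_nat s * (\<Sum>y\<in>Orb. y)"
    using orbit_main[OF xF] unfolding Orb_def s_def by blast+
  obtain r where r: "card G = 2^r" using I_card[OF I] by blast
  have nz: "(of_nat (card G) :: 'k) \<noteq> 0" unfolding r by (rule two_pow_nz[OF ch])
  then have nz2: "(of_nat (card Orb) :: 'k) \<noteq> 0" "(of_nat s :: 'k) \<noteq> 0" unfolding M(3) by auto
  have nz3: "(of_nat (card Orb) :: 'k alg_closure) \<noteq> 0" "(of_nat s :: 'k alg_closure) \<noteq> 0"
    using nz2 by (metis to_ac_of_nat to_ac_eq_0_iff)+
  show "to_ac (H x) = (\<Sum>g\<in>G. g x) / of_nat (card G)"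
    unfolding M(2) M(4) M(3) using nz3 by (simp add: field_simps)
  show "regular x"
    unfolding regular_def M(1) using nz2(1) by (simp add: of_nat_eq_0_iff_char_dvd)
qed

end


definition ext_set :: "'k::field alg_closure set \<Rightarrow> 'k alg_closure \<Rightarrow> 'k alg_closure set" where
  "ext_set F b = {z. \<exists>u\<in>F. \<exists>v\<in>F. z = u + v * b}"

definition rep :: "'k::field alg_closure set \<Rightarrow> 'k alg_closure \<Rightarrow> 'k alg_closure \<Rightarrow> 'k alg_closure \<times> 'k alg_closure" where
  "rep F b z = (SOME uv. fst uv \<in> F \<and> snd uv \<in> F \<and> z = fst uv + snd uv * b)"

definition ext_map :: "'k::field alg_closure set \<Rightarrow> 'k alg_closure \<Rightarrow> ('k alg_closure \<Rightarrow> 'k alg_closure)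
    \<Rightarrow> 'k alg_closure \<Rightarrow> 'k alg_closure \<Rightarrow> 'k alg_closure" where
  "ext_map F b g s z = (if z \<in> ext_set F b then g (fst (rep F b z)) + s * g (snd (rep F b z)) * b else z)"

lemma two_nz_ac: "CHAR('k::field) \<noteq> 2 \<Longrightarrow> (2 :: 'k alg_closure) \<noteq> 0"
  using two_pow_nz[of 1] by (metis power_one_right to_ac_eq_0_iff to_ac_numeral of_nat_numeral)

lemma one_neq_minus_one: "CHAR('k::field) \<noteq> 2 \<Longrightarrow> (1 :: 'k alg_closure) \<noteq> -1"
  using two_nz_ac[of] by (metis one_add_one add_eq_0_iff)

context
  fixes F :: "'k::field alg_closure set" and G and b :: "'k alg_closure" and c :: 'k
  assumes I: "inv_ok F G" and bF: "b \<notin> F" and bsq: "b^2 = to_ac c" and ch: "CHAR('k) \<noteq> 2"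
begin

lemma F_inverse: "a \<in> F \<Longrightarrow> inverse a \<in> F" using I_sub[OF I] unfolding subfield_def by blast
lemma F_divide: "a \<in> F \<Longrightarrow> a' \<in> F \<Longrightarrow> a / a' \<in> F"
  using F_mult[OF I] F_inverse by (simp add: divide_inverse)

lemma b_nz: "b \<noteq> 0" using bF F_0[OF I] by auto

lemma uniq:
  assumes "u \<in> F" "v \<in> F" "u' \<in> F" "v' \<in> F" "u + v * b = u' + v' * b"
  shows "u = u' \<and> v = v'"
proof (cases "v = v'")
  case True then show ?thesis using assms by simp
next
  case False
  have "(v' - v) * b = u - u'" using assms(5) by (simp add: algebra_simps)
  then have "b = (u - u') / (v' - v)" using False by (simp add: field_simps)
  moreover have "(u - u') / (v' - v) \<in> F" using assms F_diff[OF I] F_divide by blast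
  ultimately show ?thesis using bF by simp
qed

lemma rep_eq: "u \<in> F \<Longrightarrow> v \<in> F \<Longrightarrow> rep F b (u + v * b) = (u, v)"
  unfolding rep_def
proof (rule some_equality)
  assume "u \<in> F" "v \<in> F"
  then show "fst (u, v) \<in> F \<and> snd (u, v) \<in> F \<and> u + v * b = fst (u, v) + snd (u, v) * b" by simp
  fix uv assume "fst uv \<in> F \<and> snd uv \<in> F \<and> u + v * b = fst uv + snd uv * b"
  then show "uv = (u, v)" using uniq \<open>u \<in> F\<close> \<open>v \<in> F\<close> by (metis prod.collapse)
qed

lemma in_ext: "u \<in> F \<Longrightarrow> v \<in> F \<Longrightarrow> u + v * b \<in> ext_set F b"
  unfolding ext_set_def by blast

lemma ext_eq: "u \<in> F \<Longrightarrow> v \<in> F \<Longrightarrow> ext_map F b g s (u + v * b) = g u + s * g v * b"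
  unfolding ext_map_def using rep_eq in_ext by simp

lemma ext_cases: "z \<in> ext_set F b \<Longrightarrow> (\<And>u v. u \<in> F \<Longrightarrow> v \<in> F \<Longrightarrow> z = u + v * b \<Longrightarrow> P) \<Longrightarrow> P"
  unfolding ext_set_def by blast

lemma F_sub_ext: "a \<in> F \<Longrightarrow> a \<in> ext_set F b"
  using in_ext[of a 0] F_0[OF I] by simp

lemma b_in_ext: "b \<in> ext_set F b"
  using in_ext[of 0 1] F_0[OF I] F_1[OF I] by simp

lemma subfield_ext: "subfield (ext_set F b)"
proof -
  have cF: "to_ac c \<in> F" by (rule I_K[OF I])
  note FF = F_add[OF I] F_mult[OF I] F_diff[OF I] F_uminus[OF I]
  have add: "x + y \<in> ext_set F b" "x * y \<in> ext_set F b" "x - y \<in> ext_set F b"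
    if xe: "x \<in> ext_set F b" and ye: "y \<in> ext_set F b" for x y
  proof -
    obtain u v where uv: "u \<in> F" "v \<in> F" "x = u + v * b" using xe by (rule ext_cases)
    obtain u' v' where uv': "u' \<in> F" "v' \<in> F" "y = u' + v' * b" using ye by (rule ext_cases)
    have "x + y = (u + u') + (v + v') * b" unfolding uv(3) uv'(3) by (simp add: algebra_simps)
    moreover have "(u + u') + (v + v') * b \<in> ext_set F b" by (rule in_ext) (use FF uv uv' in auto)
    ultimately show "x + y \<in> ext_set F b" by simp
    have "x - y = (u - u') + (v - v') * b" unfolding uv(3) uv'(3) by (simp add: algebra_simps)
    moreover have "(u - u') + (v - v') * b \<in> ext_set F b" by (rule in_ext) (use FF uv uv' in auto)
    ultimately show "x - y \<in> ext_set F b" by simp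
    have "x * y = (u * u' + v * v' * (b * b)) + (u * v' + v * u') * b"
      unfolding uv(3) uv'(3) by (simp add: algebra_simps)
    then have "x * y = (u * u' + v * v' * to_ac c) + (u * v' + v * u') * b"
      using bsq by (simp add: power2_eq_square)
    moreover have "(u * u' + v * v' * to_ac c) + (u * v' + v * u') * b \<in> ext_set F b" by (rule in_ext) (use FF uv uv' cF in auto)
    ultimately show "x * y \<in> ext_set F b" by simp
  qed
  have neg: "- x \<in> ext_set F b" if xe: "x \<in> ext_set F b" for x
  proof -
    obtain u v where uv: "u \<in> F" "v \<in> F" "x = u + v * b" using xe by (rule ext_cases)
    have "- x = (- u) + (- v) * b" unfolding uv(3) by simp
    moreover have "(- u) + (- v) * b \<in> ext_set F b" by (rule in_ext) (use FF uv in auto)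
    ultimately show ?thesis by simp
  qed
  have inv: "inverse x \<in> ext_set F b" if xe: "x \<in> ext_set F b" for x
  proof -
    obtain u v where uv: "u \<in> F" "v \<in> F" "x = u + v * b" using xe by (rule ext_cases)
    show ?thesis
    proof (cases "x = 0")
      case True then show ?thesis using F_sub_ext F_0[OF I] by simp
    next
      case False
      define N where "N = u * u - v * v * to_ac c"
      have NF: "N \<in> F" unfolding N_def using uv cF FF by simp
      have N0: "N \<noteq> 0"
      proof
        assume N: "N = 0"
        show False
        proof (cases "v = 0")
          case True
          then have "u = 0" using N unfolding N_def by simp
          then show False using False uv True by simp
        next
          case vnz: False
          have "(b - u / v) * (b + u / v) = b^2 - (u/v)^2" by (simp add: algebra_simps power2_eq_square)
          also have "\<dots> = 0" using N vnz bsq unfolding N_def by (simp add: field_simps power2_eq_square)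
          finally have "b = u / v \<or> b = - (u / v)" by (simp add: eq_neg_iff_add_eq_0)
          moreover have "u / v \<in> F" "- (u / v) \<in> F" using F_divide uv FF by auto
          ultimately show False using bF by auto
        qed
      qed
      have bb: "b * b = to_ac c" using bsq by (simp add: power2_eq_square)
      have "x * (u - v * b) = u * u - v * v * (b * b)" unfolding uv(3) by (simp add: algebra_simps)
      then have xN: "x * (u - v * b) = N" unfolding N_def bb .
      have "x * ((u * inverse N) + (- (v * inverse N)) * b) = (x * (u - v * b)) * inverse N"
        by (simp add: algebra_simps)
      then have "x * ((u * inverse N) + (- (v * inverse N)) * b) = 1" using xN N0 by simp
      then have "inverse x = (u * inverse N) + (- (v * inverse N)) * b" by (rule inverse_unique)
    moreover have "(u * inverse N) + (- (v * inverse N)) * b \<in> ext_set F b" by (rule in_ext) (use FF uv F_inverse NF in auto)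
    ultimately show ?thesis by simp
    qed
  qed
  have z: "0 \<in> ext_set F b" using F_sub_ext F_0[OF I] by blast
  have o: "1 \<in> ext_set F b" using F_sub_ext F_1[OF I] by blast
  show ?thesis unfolding subfield_def by (simp add: z o add neg inv)
qed

end


context
  fixes F :: "'k::field alg_closure set" and G and b :: "'k alg_closure" and c :: 'k
  assumes I: "inv_ok F G" and bF: "b \<notin> F" and bsq: "b^2 = to_ac c" and ch: "CHAR('k) \<noteq> 2"
begin

lemma sgn_F: "s \<in> {1, -1} \<Longrightarrow> s \<in> F" using F_1[OF I] F_uminus[OF I] by auto

lemma g_sgn: "g \<in> G \<Longrightarrow> s \<in> {1, -1} \<Longrightarrow> g s = s"
  using I_K_fix[OF I, of g 1] g_uminus[OF I, of g 1] F_1[OF I] by auto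

lemma g_smul: "g \<in> G \<Longrightarrow> s \<in> {1, -1} \<Longrightarrow> w \<in> F \<Longrightarrow> g (s * w) = s * g w"
  using I_mult[OF I, of g s w] sgn_F g_sgn by simp

lemma ext_in: "g \<in> G \<Longrightarrow> s \<in> {1, -1} \<Longrightarrow> z \<in> ext_set F b \<Longrightarrow> ext_map F b g s z \<in> ext_set F b"
proof -
  assume g: "g \<in> G" and s: "s \<in> {1, -1}" and z: "z \<in> ext_set F b"
  obtain u v where uv: "u \<in> F" "v \<in> F" "z = u + v * b" using z by (rule ext_cases[OF I bF bsq ch])
  have "ext_map F b g s z = g u + (s * g v) * b" unfolding uv(3) using ext_eq[OF I bF bsq ch uv(1,2)] by simp
  moreover have "g u + (s * g v) * b \<in> ext_set F b"
    by (rule in_ext[OF I bF bsq ch]) (use I_in[OF I g] uv F_mult[OF I] sgn_F[OF s] in auto)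
  ultimately show ?thesis by simp
qed

lemma ext_out: "z \<notin> ext_set F b \<Longrightarrow> ext_map F b g s z = z"
  unfolding ext_map_def by simp

lemma ext_id: "ext_map F b id 1 = id"
proof
  fix z
  show "ext_map F b id 1 z = id z"
  proof (cases "z \<in> ext_set F b")
    case True
    obtain u v where uv: "u \<in> F" "v \<in> F" "z = u + v * b" using True by (rule ext_cases[OF I bF bsq ch])
    show ?thesis unfolding uv(3) using ext_eq[OF I bF bsq ch uv(1,2)] by simp
  qed (simp add: ext_out)
qed

lemma ext_comp:
  assumes g: "g \<in> G" and h: "h \<in> G" and s: "s \<in> {1, -1}" and t: "t \<in> {1, -1}"
  shows "ext_map F b g s \<circ> ext_map F b h t = ext_map F b (g \<circ> h) (s * t)"
proof
  fix z
  show "(ext_map F b g s \<circ> ext_map F b h t) z = ext_map F b (g \<circ> h) (s * t) z"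
  proof (cases "z \<in> ext_set F b")
    case True
    obtain u v where uv: "u \<in> F" "v \<in> F" "z = u + v * b" using True by (rule ext_cases[OF I bF bsq ch])
    have hu: "h u \<in> F" and tv: "t * h v \<in> F" using I_in[OF I h] uv F_mult[OF I] sgn_F[OF t] by auto
    have "ext_map F b h t z = h u + (t * h v) * b" unfolding uv(3) using ext_eq[OF I bF bsq ch uv(1,2)] by simp
    then have "(ext_map F b g s \<circ> ext_map F b h t) z = g (h u) + s * g (t * h v) * b"
      using ext_eq[OF I bF bsq ch hu tv] by simp
    also have "\<dots> = g (h u) + (s * t) * g (h v) * b" using g_smul[OF g t I_in[OF I h uv(2)]] by simp
    also have "\<dots> = ext_map F b (g \<circ> h) (s * t) z" unfolding uv(3) using ext_eq[OF I bF bsq ch uv(1,2)] by simp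
    finally show ?thesis .
  qed (simp add: ext_out)
qed

lemma ext_add_mult:
  assumes g: "g \<in> G" and s: "s \<in> {1, -1}" and x: "x \<in> ext_set F b" and y: "y \<in> ext_set F b"
  shows "ext_map F b g s (x + y) = ext_map F b g s x + ext_map F b g s y \<and>
         ext_map F b g s (x * y) = ext_map F b g s x * ext_map F b g s y"
proof -
  obtain u v where uv: "u \<in> F" "v \<in> F" "x = u + v * b" using x by (rule ext_cases[OF I bF bsq ch])
  obtain u' v' where uv': "u' \<in> F" "v' \<in> F" "y = u' + v' * b" using y by (rule ext_cases[OF I bF bsq ch])
  note FF = F_add[OF I] F_mult[OF I]
  have cF: "to_ac c \<in> F" by (rule I_K[OF I])
  have ss: "s * s = 1" using s by auto
  have bb: "b * b = to_ac c" using bsq by (simp add: power2_eq_square)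
  have ex: "ext_map F b g s x = g u + s * g v * b" unfolding uv(3) by (rule ext_eq[OF I bF bsq ch uv(1,2)])
  have ey: "ext_map F b g s y = g u' + s * g v' * b" unfolding uv'(3) by (rule ext_eq[OF I bF bsq ch uv'(1,2)])
  have e1: "x + y = (u + u') + (v + v') * b" unfolding uv(3) uv'(3) by (simp add: algebra_simps)
  have "ext_map F b g s (x + y) = g (u + u') + s * g (v + v') * b"
    unfolding e1 by (rule ext_eq[OF I bF bsq ch]) (use FF uv uv' in auto)
  also have "\<dots> = ext_map F b g s x + ext_map F b g s y"
    unfolding ex ey using I_add[OF I g] uv uv' by (simp add: algebra_simps)
  finally have A: "ext_map F b g s (x + y) = ext_map F b g s x + ext_map F b g s y" .
  have "x * y = (u * u' + v * v' * (b * b)) + (u * v' + v * u') * b"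
    unfolding uv(3) uv'(3) by (simp add: algebra_simps)
  then have xy: "x * y = (u * u' + v * v' * to_ac c) + (u * v' + v * u') * b" unfolding bb .
  have m1: "u * u' + v * v' * to_ac c \<in> F" "u * v' + v * u' \<in> F" using FF uv uv' cF by auto
  have "ext_map F b g s (x * y) = g (u * u' + v * v' * to_ac c) + s * g (u * v' + v * u') * b"
    unfolding xy by (rule ext_eq[OF I bF bsq ch m1])
  also have "\<dots> = (g u * g u' + g v * g v' * to_ac c) + s * (g u * g v' + g v * g u') * b"
    using I_add[OF I g] I_mult[OF I g] I_K_fix[OF I g] uv uv' FF cF by simp
  also have "\<dots> = (g u * g u' + (s * s) * g v * g v' * (b * b)) + s * (g u * g v' + g v * g u') * b"
    unfolding ss bb by simp
  also have "\<dots> = ext_map F b g s x * ext_map F b g s y"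
    unfolding ex ey by (simp add: algebra_simps)
  finally show ?thesis using A by simp
qed

lemma ext_K: assumes g: "g \<in> G" shows "ext_map F b g s (to_ac k) = to_ac k"
proof -
  have "ext_map F b g s (to_ac k + 0 * b) = g (to_ac k) + s * g 0 * b"
    by (rule ext_eq[OF I bF bsq ch I_K[OF I] F_0[OF I]])
  then show ?thesis using I_K_fix[OF I g] g0[OF I g] by simp
qed

lemma ext_inj: "inj_on (\<lambda>(g, s). ext_map F b g s) (G \<times> {1, -1})"
proof (rule inj_onI, clarify)
  fix g s h t assume g: "g \<in> G" and s: "s \<in> {1, -1}" and h: "h \<in> G" and t: "t \<in> {1, -1}"
    and eq: "ext_map F b g s = ext_map F b h t"
  have "ext_map F b g s (0 + 1 * b) = ext_map F b h t (0 + 1 * b)" using eq by simp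
  then have "s * b = t * b" using ext_eq[OF I bF bsq ch F_0[OF I] F_1[OF I]] g0[OF I g] g0[OF I h]
      I_K_fix[OF I g, of 1] I_K_fix[OF I h, of 1] by simp
  then have st: "s = t" using b_nz[OF I bF bsq ch] by simp
  have "g z = h z" for z
  proof (cases "z \<in> F")
    case True
    have "ext_map F b g s (z + 0 * b) = ext_map F b h t (z + 0 * b)" using eq by simp
    then show ?thesis using ext_eq[OF I bF bsq ch True F_0[OF I]] g0[OF I g] g0[OF I h] by simp
  next
    case False
    then show ?thesis using I_out[OF I g] I_out[OF I h] by simp
  qed
  then show "g = h \<and> s = t" using st by auto
qed

lemma inv_ok_ext:
  "inv_ok (ext_set F b) ((\<lambda>(g, s). ext_map F b g s) ` (G \<times> {1, -1}))"
proof -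
  define G' where "G' = (\<lambda>(g, s). ext_map F b g s) ` (G \<times> {1, -1})"
  have fin: "finite G'" unfolding G'_def using I_fin[OF I] by simp
  have idG: "id \<in> G'" unfolding G'_def using ext_id I_id[OF I] by force
  have card: "\<exists>r. card G' = 2^r"
  proof -
    obtain r where r: "card G = 2^r" using I_card[OF I] by blast
    have "card G' = card (G \<times> {1, -1 :: 'k alg_closure})" unfolding G'_def by (rule card_image[OF ext_inj])
    also have "\<dots> = card G * 2" using one_neq_minus_one[OF ch] I_fin[OF I] by (simp add: card_cartesian_product)
    finally have "card G' = 2^(Suc r)" using r by simp
    then show ?thesis by blast
  qed
  have mem: "f \<in> G' \<Longrightarrow> (\<And>g s. g \<in> G \<Longrightarrow> s \<in> {1, -1} \<Longrightarrow> f = ext_map F b g s \<Longrightarrow> P) \<Longrightarrow> P" for f P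
    unfolding G'_def by auto
  have memI: "g \<in> G \<Longrightarrow> s \<in> {1, -1} \<Longrightarrow> ext_map F b g s \<in> G'" for g s
    unfolding G'_def by force
  have A1: "\<forall>f\<in>G'. \<forall>z. z \<notin> ext_set F b \<longrightarrow> f z = z" using mem ext_out by metis
  have A2: "\<forall>f\<in>G'. \<forall>z\<in>ext_set F b. f z \<in> ext_set F b" using mem ext_in by metis
  have A3: "\<forall>f\<in>G'. \<forall>x\<in>ext_set F b. \<forall>y\<in>ext_set F b. f (x + y) = f x + f y \<and> f (x * y) = f x * f y"
    using mem ext_add_mult by metis
  have A4: "\<forall>f\<in>G'. \<forall>k. f (to_ac k) = to_ac k" using mem ext_K by metis
  have A5: "\<forall>f\<in>G'. \<forall>f'\<in>G'. f \<circ> f' \<in> G'"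
  proof (intro ballI)
    fix f f' assume "f \<in> G'" "f' \<in> G'"
    then obtain g s h t where "g \<in> G" "s \<in> {1, -1}" "f = ext_map F b g s"
       "h \<in> G" "t \<in> {1, -1}" "f' = ext_map F b h t" using mem by metis
    then show "f \<circ> f' \<in> G'" using ext_comp memI I_comp[OF I] by auto
  qed
  have A6: "\<forall>f\<in>G'. f \<circ> f = id"
  proof
    fix f assume "f \<in> G'"
    then obtain g s where g: "g \<in> G" "s \<in> {1, -1}" "f = ext_map F b g s" using mem by metis
    have "g \<circ> g = id" using I_invol[OF I g(1)] by (auto simp: fun_eq_iff)
    moreover have "s * s = 1" using g(2) by auto
    ultimately show "f \<circ> f = id" using ext_comp[OF g(1) g(1) g(2) g(2)] ext_id g(3) by simp
  qed
  have A7: "\<forall>z\<in>ext_set F b. (\<forall>f\<in>G'. f z = z) \<longrightarrow> z \<in> range to_ac"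
  proof (intro ballI impI)
    fix z assume z: "z \<in> ext_set F b" and fx: "\<forall>f\<in>G'. f z = z"
    obtain u v where uv: "u \<in> F" "v \<in> F" "z = u + v * b" using z by (rule ext_cases[OF I bF bsq ch])
    have "ext_map F b id (-1) z = z" using fx memI I_id[OF I] by auto
    then have "u - v * b = u + v * b" unfolding uv(3) using ext_eq[OF I bF bsq ch uv(1,2)] by simp
    then have "2 * (v * b) = 0" by (simp add: algebra_simps)
    then have v0: "v = 0" using two_nz_ac[OF ch] b_nz[OF I bF bsq ch] by simp
    show "z \<in> range to_ac"
    proof (rule I_fix[OF I])
      show "z \<in> F" using uv v0 by simp
      fix g assume g: "g \<in> G"
      have "ext_map F b g 1 z = z" using fx memI g by auto
      then show "g z = z" unfolding uv(3) using ext_eq[OF I bF bsq ch uv(1,2)] v0 g0[OF I g] by simp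
    qed
  qed
  have K: "range to_ac \<subseteq> ext_set F b" using F_sub_ext[OF I bF bsq ch] I_K[OF I] by blast
  show ?thesis unfolding inv_ok_def G'_def[symmetric]
    using subfield_ext[OF I bF bsq ch] K fin idG card A1 A2 A3 A4 A5 A6 A7 by blast
qed

end


lemma step:
  assumes I: "inv_ok F G" and ch: "CHAR('k::field) \<noteq> 2" and bsq: "b^2 \<in> range (to_ac :: 'k \<Rightarrow> _)"
  shows "\<exists>F' G'. inv_ok F' G' \<and> F \<subseteq> F' \<and> b \<in> F' \<and> (card G' = card G \<or> card G' = 2 * card G)"
proof (cases "b \<in> F")
  case True then show ?thesis using I by blast
next
  case False
  obtain c where c: "b^2 = to_ac c" using bsq by blast
  define G' where "G' = (\<lambda>(g, s). ext_map F b g s) ` (G \<times> {1, -1})"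
  have "card G' = card (G \<times> {1, -1 :: 'k alg_closure})" unfolding G'_def
    by (rule card_image[OF ext_inj[OF I False c ch]])
  also have "\<dots> = 2 * card G" using one_neq_minus_one[OF ch] I_fin[OF I] by (simp add: card_cartesian_product)
  finally have cG: "card G' = 2 * card G" .
  have "inv_ok (ext_set F b) G'" unfolding G'_def by (rule inv_ok_ext[OF I False c ch])
  moreover have "F \<subseteq> ext_set F b" using F_sub_ext[OF I False c ch] by blast
  moreover have "b \<in> ext_set F b" by (rule b_in_ext[OF I False c ch])
  ultimately show ?thesis using cG by blast
qed

lemma min_poly_nz: "min_poly x \<noteq> 0"
  using min_poly_props[of x] by auto

lemma deg_pos: "deg_over x \<ge> 1"
proof (rule ccontr)
  assume "\<not> deg_over x \<ge> 1"
  then have d: "degree (min_poly x) = 0" unfolding deg_over_def by simp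
  have l: "coeff (min_poly x) 0 = 1" using min_poly_props[of x] d by simp
  have "poly (map_poly to_ac (min_poly x)) x = 0" using min_poly_props[of x] by blast
  then show False unfolding eval_eq using d l by simp
qed

lemma deg_eval:
  assumes "deg_over x = 2"
  shows "x^2 + to_ac (coeff (min_poly x) 1) * x + to_ac (coeff (min_poly x) 0) = 0"
proof -
  have d: "degree (min_poly x) = 2" using assms unfolding deg_over_def .
  have l: "coeff (min_poly x) 2 = 1" using min_poly_props[of x] d by simp
  have "poly (map_poly to_ac (min_poly x)) x = 0" using min_poly_props[of x] by blast
  then show ?thesis unfolding eval_eq d using l
    by (simp add: numeral_2_eq_2 atMost_Suc algebra_simps power2_eq_square)
qed

lemma deg_eval1:
  assumes "deg_over x = 1"
  shows "x + to_ac (coeff (min_poly x) 0) = 0"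
proof -
  have d: "degree (min_poly x) = 1" using assms unfolding deg_over_def .
  have l: "coeff (min_poly x) 1 = 1" using min_poly_props[of x] d by simp
  have "poly (map_poly to_ac (min_poly x)) x = 0" using min_poly_props[of x] by blast
  then show ?thesis unfolding eval_eq d using l by (simp add: atMost_Suc algebra_simps)
qed

lemma decomp:
  assumes ch: "CHAR('k::field) \<noteq> 2" and d: "deg_over (x :: 'k alg_closure) \<le> 2"
  shows "\<exists>a b. x = to_ac a + b \<and> b^2 \<in> range (to_ac :: 'k \<Rightarrow> _)"
proof -
  have two: "(2::'k) \<noteq> 0" using two_pow_nz[OF ch, of 1] by simp
  have "deg_over x = 1 \<or> deg_over x = 2" using d deg_pos[of x] by linarith
  then show ?thesis
  proof
    assume d1: "deg_over x = 1"
    have "x = to_ac (- coeff (min_poly x) 0) + 0" using deg_eval1[OF d1] by (simp add: eq_neg_iff_add_eq_0)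
    moreover have "(0::'k alg_closure)^2 \<in> range to_ac" by (metis power_zero_numeral to_ac_0 rangeI)
    ultimately show ?thesis by blast
  next
    assume d2: "deg_over x = 2"
    define p1 where "p1 = coeff (min_poly x) 1"
    define p0 where "p0 = coeff (min_poly x) 0"
    have e: "x^2 + to_ac p1 * x + to_ac p0 = 0" using deg_eval[OF d2] unfolding p1_def p0_def .
    define b where "b = x + to_ac (p1 / 2)"
    have "b^2 = x^2 + to_ac p1 * x + to_ac (p1/2)^2"
    proof -
      have h: "to_ac (p1 / 2) * 2 = to_ac p1" using two by (metis nonzero_eq_divide_eq to_ac_mult to_ac_numeral)
      have "b^2 = x^2 + (to_ac (p1 / 2) * 2) * x + to_ac (p1/2)^2"
        unfolding b_def power2_eq_square by (simp add: algebra_simps)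
      then show ?thesis unfolding h .
    qed
    also have "\<dots> = to_ac ((p1/2)^2 - p0)" using e by (simp add: algebra_simps)
    finally have "b^2 \<in> range to_ac" by blast
    moreover have "x = to_ac (- (p1/2)) + b" unfolding b_def by simp
    ultimately show ?thesis by blast
  qed
qed

lemma tower:
  fixes n :: nat
  assumes ch: "CHAR('k::field) \<noteq> 2"
  shows "(\<forall>i<n. deg_over (th i :: 'k alg_closure) \<le> 2) \<Longrightarrow> \<exists>F G. inv_ok F G \<and> (\<forall>i<n. th i \<in> F)"
proof (induction n)
  case 0 then show ?case using inv_ok_base by blast
next
  case (Suc n)
  then obtain F G where FG: "inv_ok F G" "\<forall>i<n. th i \<in> F" by auto
  obtain a b where ab: "th n = to_ac a + b" "b^2 \<in> range (to_ac :: 'k \<Rightarrow> _)"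
    using decomp[OF ch] Suc.prems by blast
  obtain F' G' where F'G': "inv_ok F' G'" "F \<subseteq> F'" "b \<in> F'" using step[OF FG(1) ch ab(2)] by blast
  have "th n \<in> F'" unfolding ab(1) using F_add[OF F'G'(1) I_K[OF F'G'(1)] F'G'(3)] .
  then have "\<forall>i<Suc n. th i \<in> F'" using FG(2) F'G'(2) less_Suc_eq by auto
  then show ?case using F'G'(1) by blast
qed

lemma invol_eq: "invol z = 2 * to_ac (H z) - z"
  unfolding invol_def V_def by (simp add: algebra_simps)

lemma gen_field_sub: "subfield F \<Longrightarrow> range to_ac \<subseteq> F \<Longrightarrow> S \<subseteq> F \<Longrightarrow> gen_field S \<subseteq> F"
  unfolding gen_field_def by blast

lemma part_b:
  fixes th :: "nat \<Rightarrow> 'k::field alg_closure" and n :: nat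
  assumes ch: "CHAR('k::field) \<noteq> 2" and d: "\<forall>i<n. deg_over (th i :: 'k alg_closure) \<le> 2"
  shows "gen_field (th ` {..<n}) \<subseteq> {x. regular x} \<and> invol (\<Sum>i<n. th i) = (\<Sum>i<n. invol (th i))"
proof -
  obtain F G where FG: "inv_ok F G" "\<forall>i<n. th i \<in> F" using tower[OF ch d] by blast
  have sub: "gen_field (th ` {..<n}) \<subseteq> F"
    by (rule gen_field_sub) (use FG I_sub[OF FG(1)] I_K[OF FG(1)] in auto)
  have reg: "gen_field (th ` {..<n}) \<subseteq> {x. regular x}" using sub orbit_H(2)[OF FG(1) _ ch] by blast
  have sF: "(\<Sum>i<n. th i) \<in> F" using FG(2) by (intro F_sum[OF FG(1)]) auto
  have "to_ac (H (\<Sum>i<n. th i)) = (\<Sum>g\<in>G. g (\<Sum>i<n. th i)) / of_nat (card G)"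
    by (rule orbit_H(1)[OF FG(1) sF ch])
  also have "\<dots> = (\<Sum>g\<in>G. \<Sum>i<n. g (th i)) / of_nat (card G)"
  proof -
    have "g (\<Sum>i<n. th i) = (\<Sum>i<n. g (th i))" if "g \<in> G" for g
      using FG(2) by (intro g_sum[OF FG(1) that]) auto
    then show ?thesis by simp
  qed
  also have "\<dots> = (\<Sum>i<n. (\<Sum>g\<in>G. g (th i)) / of_nat (card G))"
    by (simp add: sum.swap[of _ G] sum_divide_distrib)
  also have "\<dots> = (\<Sum>i<n. to_ac (H (th i)))"
    using orbit_H(1)[OF FG(1) _ ch] FG(2) by simp
  finally have hs: "to_ac (H (\<Sum>i<n. th i)) = (\<Sum>i<n. to_ac (H (th i)))" .
  have "invol (\<Sum>i<n. th i) = (\<Sum>i<n. invol (th i))"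
    unfolding invol_eq hs by (simp add: sum_subtractf sum_distrib_left)
  then show ?thesis using reg by blast
qed


lemma G_cases_12:
  assumes I: "inv_ok F G" and c: "card G = 1 \<or> card G = 2"
  shows "G = {id} \<or> (\<exists>\<sigma>. G = {id, \<sigma>} \<and> \<sigma> \<noteq> id)"
proof (cases "card G = 1")
  case True
  then obtain a where "G = {a}" by (auto simp: card_Suc_eq)
  then show ?thesis using I_id[OF I] by auto
next
  case False
  then have "card G = 2" using c by simp
  then obtain a b where ab: "G = {a, b}" "a \<noteq> b" by (auto simp: card_2_iff)
  then have "a = id \<or> b = id" using I_id[OF I] by auto
  then show ?thesis using ab by (metis insert_commute)
qed

lemma part_c:
  assumes ch: "CHAR('k::field) \<noteq> 2" and d: "deg_over (lam :: 'k alg_closure) \<le> 2"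
  shows "\<forall>x\<in>gen_field {lam}. \<forall>y\<in>gen_field {lam}. invol (x * y) = invol x * invol y"
proof -
  obtain a b where ab: "lam = to_ac a + b" "b^2 \<in> range (to_ac :: 'k \<Rightarrow> _)" using decomp[OF ch d] by blast
  obtain F G where FG: "inv_ok F G" "range to_ac \<subseteq> F" "b \<in> F" "card G = 1 \<or> card G = 2"
    using step[OF inv_ok_base ch ab(2)] by force
  have lF: "lam \<in> F" unfolding ab(1) using F_add[OF FG(1) I_K[OF FG(1)] FG(3)] .
  have sub: "gen_field {lam} \<subseteq> F"
    by (rule gen_field_sub) (use FG I_sub[OF FG(1)] lF in auto)
  have two: "(2 :: 'k alg_closure) \<noteq> 0" by (rule two_nz_ac[OF ch])
  have iv: "invol x = 2 * ((\<Sum>g\<in>G. g x) / of_nat (card G)) - x" if "x \<in> F" for x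
    unfolding invol_eq orbit_H(1)[OF FG(1) that ch] ..
  from G_cases_12[OF FG(1) FG(4)] show ?thesis
  proof
    assume G1: "G = {id}"
    have ix: "invol x = x" if "x \<in> F" for x using iv[OF that] unfolding G1 by simp
    show ?thesis
    proof (intro ballI)
      fix x y assume "x \<in> gen_field {lam}" "y \<in> gen_field {lam}"
      then have xy: "x \<in> F" "y \<in> F" using sub by auto
      then have "x * y \<in> F" by (rule F_mult[OF FG(1)])
      then show "invol (x * y) = invol x * invol y" using ix xy by simp
    qed
  next
    assume "\<exists>\<sigma>. G = {id, \<sigma>} \<and> \<sigma> \<noteq> id"
    then obtain \<sigma> where G2: "G = {id, \<sigma>}" "\<sigma> \<noteq> id" by blast
    have sG: "\<sigma> \<in> G" using G2 by simp
    have "invol x = \<sigma> x" if "x \<in> F" for x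
    proof -
      have "card G = 2" using G2 by auto
      then have "invol x = 2 * ((x + \<sigma> x) / 2) - x" using iv[OF that] G2 by (simp add: sum.insert_if)
      also have "\<dots> = \<sigma> x" using two by (simp add: field_simps)
      finally show ?thesis .
    qed
    note ix = this
    show ?thesis
    proof (intro ballI)
      fix x y assume "x \<in> gen_field {lam}" "y \<in> gen_field {lam}"
      then have xy: "x \<in> F" "y \<in> F" using sub by auto
      then have "x * y \<in> F" by (rule F_mult[OF FG(1)])
      then show "invol (x * y) = invol x * invol y" using ix xy I_mult[OF FG(1) sG xy] by simp
    qed
  qed
qed

lemma eval2:
  assumes "degree p = 2" "lead_coeff p = 1"
  shows "poly (map_poly to_ac p) mu = mu^2 + to_ac (coeff p 1) * mu + to_ac (coeff p 0)"
  unfolding eval_eq using assms by (simp add: numeral_2_eq_2 atMost_Suc algebra_simps power2_eq_square)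

lemma quad_min:
  assumes nK: "x \<notin> range to_ac" and e: "x^2 + to_ac p * x + to_ac q = 0"
  shows "min_poly x = [:q, p, 1:]"
proof (rule min_poly_eqI)
  show "lead_coeff [:q, p, 1:] = 1" by simp
  have "poly (map_poly to_ac [:q, p, 1:]) x = x^2 + to_ac p * x + to_ac q"
    by (subst eval2) auto
  then show "poly (map_poly to_ac [:q, p, 1:]) x = 0" using e by simp
  show "\<forall>r. r \<noteq> 0 \<and> poly (map_poly to_ac r) x = 0 \<longrightarrow> degree [:q, p, 1:] \<le> degree r"
  proof (intro allI impI)
    fix r :: "'a poly" assume r: "r \<noteq> 0 \<and> poly (map_poly to_ac r) x = 0"
    have lc: "coeff r (degree r) \<noteq> 0" using r by simp
    have "\<not> degree r \<le> 1"
    proof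
      assume "degree r \<le> 1"
      then have "degree r = 0 \<or> degree r = 1" by linarith
      then show False
      proof
        assume d0: "degree r = 0"
        have "to_ac (coeff r 0) = 0" using r unfolding eval_eq d0 by simp
        then show False using lc d0 by simp
      next
        assume d1: "degree r = 1"
        have "to_ac (coeff r 1) * x + to_ac (coeff r 0) = 0" using r unfolding eval_eq d1
          by (simp add: atMost_Suc)
        then have cx: "to_ac (coeff r 1) * x = - to_ac (coeff r 0)" by (simp add: eq_neg_iff_add_eq_0)
        have nz: "to_ac (coeff r 1) \<noteq> 0" using lc d1 by simp
        have "x = to_ac (coeff r 1) * x / to_ac (coeff r 1)" using nz by simp
        also have "\<dots> = - to_ac (coeff r 0) / to_ac (coeff r 1)" unfolding cx ..
        finally have "x = to_ac (- coeff r 0 / coeff r 1)" by simp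
        then show False using nK by blast
      qed
    qed
    then show "degree [:q, p, 1:] \<le> degree r" by simp
  qed
qed

lemma deg2_notK:
  assumes "deg_over x = 2" shows "x \<notin> range to_ac"
proof
  assume "x \<in> range to_ac"
  then obtain k where k: "x = to_ac k" by blast
  have mp: "\<forall>q. q \<noteq> 0 \<and> poly (map_poly to_ac q) x = 0 \<longrightarrow> degree (min_poly x) \<le> degree q"
    using min_poly_props[of x] by blast
  have "poly (map_poly to_ac [:-k, 1:]) x = 0" using k by (simp add: map_poly_pCons)
  then have "degree (min_poly x) \<le> degree [:-k, 1:]" using mp[rule_format, of "[:-k, 1:]"] by simp
  then show False using assms unfolding deg_over_def by simp
qed

lemma deg2_H: assumes d: "deg_over x = 2" shows "H x = - coeff (min_poly x) 1 / 2"
proof -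
  have "H x = - coeff (min_poly x) (2 - 1) / of_nat 2" unfolding H_def d by (rule refl)
  then show ?thesis by simp
qed

lemma regular2:
  assumes ch: "CHAR('k::field) \<noteq> 2" and d: "deg_over (x :: 'k alg_closure) = 2"
  shows "regular x"
proof -
  have t: "(of_nat 2 :: 'k) \<noteq> 0" using two_pow_nz[OF ch, of 1] by simp
  have nd: "\<not> CHAR('k) dvd 2"
  proof
    assume "CHAR('k) dvd 2"
    then have "(of_nat 2 :: 'k) = 0" by (simp only: of_nat_eq_0_iff_char_dvd)
    then show False using t by blast
  qed
  show ?thesis unfolding regular_def d by (rule nd)
qed

lemma sq_ker:
  assumes ch: "CHAR('k::field) \<noteq> 2" and nK: "(x :: 'k alg_closure) \<notin> range to_ac" and sq: "x^2 \<in> range to_ac"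
  shows "deg_over x = 2 \<and> x \<in> KerH"
proof -
  obtain c where c: "x^2 = to_ac c" using sq by blast
  have "x^2 + to_ac 0 * x + to_ac (- c) = 0" using c by simp
  then have m: "min_poly x = [:-c, 0, 1:]" by (rule quad_min[OF nK])
  then have d: "deg_over x = 2" unfolding deg_over_def by simp
  have "H x = 0" using deg2_H[OF d] m by simp
  then show ?thesis using d regular2[OF ch d] unfolding KerH_def by simp
qed

lemma part_e:
  assumes ch: "CHAR('k::field) \<noteq> 2" and d: "deg_over (x :: 'k alg_closure) = 2"
  shows "x \<in> KerH \<longleftrightarrow> x \<notin> range to_ac \<and> x^2 \<in> range to_ac"
proof
  assume "x \<in> KerH"
  then have "H x = 0" unfolding KerH_def by simp
  moreover have "(2::'k) \<noteq> 0" using two_pow_nz[OF ch, of 1] by simp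
  ultimately have c1: "coeff (min_poly x) 1 = 0" using deg2_H[OF d] by simp
  have "x^2 = to_ac (- coeff (min_poly x) 0)" using deg_eval[OF d] c1 by (simp add: eq_neg_iff_add_eq_0)
  then show "x \<notin> range to_ac \<and> x^2 \<in> range to_ac" using deg2_notK[OF d] by blast
next
  assume "x \<notin> range to_ac \<and> x^2 \<in> range to_ac"
  then show "x \<in> KerH" using sq_ker[OF ch] by blast
qed


lemma part_a:
  assumes ch: "CHAR('k::field) \<noteq> 2" and bK: "\<beta> \<in> KerH" and lam: "lam = to_ac (\<alpha>::'k) + \<beta>"
    and d: "deg_over lam = 2"
  shows "{mu. poly (map_poly to_ac (min_poly lam)) mu = 0} - {lam} = {invol lam} \<and> invol lam = to_ac \<alpha> - \<beta>"
proof -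
  have two: "(2::'k) \<noteq> 0" using two_pow_nz[OF ch, of 1] by simp
  have two': "(2::'k alg_closure) \<noteq> 0" by (rule two_nz_ac[OF ch])
  define p1 where "p1 = coeff (min_poly lam) 1"
  define p0 where "p0 = coeff (min_poly lam) 0"
  have e: "lam^2 + to_ac p1 * lam + to_ac p0 = 0" using deg_eval[OF d] unfolding p1_def p0_def .
  have lnK: "lam \<notin> range to_ac" by (rule deg2_notK[OF d])
  have bnK: "\<beta> \<notin> range to_ac"
  proof
    assume "\<beta> \<in> range to_ac"
    then obtain k where "\<beta> = to_ac k" by blast
    then have "lam = to_ac (\<alpha> + k)" unfolding lam by simp
    then show False using lnK by blast
  qed
  have "\<beta>^2 + to_ac (2 * \<alpha> + p1) * \<beta> + to_ac (\<alpha>^2 + p1 * \<alpha> + p0) = lam^2 + to_ac p1 * lam + to_ac p0"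
    unfolding lam by (simp add: algebra_simps power2_eq_square)
  then have eb: "\<beta>^2 + to_ac (2 * \<alpha> + p1) * \<beta> + to_ac (\<alpha>^2 + p1 * \<alpha> + p0) = 0" using e by simp
  have mb: "min_poly \<beta> = [:\<alpha>^2 + p1 * \<alpha> + p0, 2 * \<alpha> + p1, 1:]" by (rule quad_min[OF bnK eb])
  then have db: "deg_over \<beta> = 2" unfolding deg_over_def by simp
  have hb1: "H \<beta> = - (2 * \<alpha> + p1) / 2" using deg2_H[OF db] mb by simp
  have hb0: "H \<beta> = 0" using bK unfolding KerH_def by simp
  have "- (2 * \<alpha> + p1) / 2 = 0" by (rule trans[OF hb1[symmetric] hb0])
  then have "2 * \<alpha> + p1 = 0 \<or> (2::'k) = 0" by (simp only: divide_eq_0_iff neg_equal_0_iff_equal)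
  then have "2 * \<alpha> + p1 = 0" using two by blast
  then have p1a: "p1 = - 2 * \<alpha>" by (simp add: eq_neg_iff_add_eq_0 add.commute)
  have "H lam = - p1 / 2" using deg2_H[OF d] unfolding p1_def .
  also have "\<dots> = - (- 2 * \<alpha>) / 2" unfolding p1a ..
  also have "\<dots> = (2 * \<alpha>) / 2" by simp
  also have "\<dots> = \<alpha>" by (rule nonzero_mult_div_cancel_left[OF two])
  finally have Hl: "H lam = \<alpha>" .
  have il0: "invol lam = 2 * to_ac \<alpha> - lam" unfolding invol_eq Hl ..
  have il: "invol lam = to_ac \<alpha> - \<beta>" by (subst il0) (simp add: lam algebra_simps)
  define A where "A = to_ac \<alpha>"
  define Q where "Q = to_ac p0"
  have P: "to_ac p1 = - 2 * A" unfolding A_def p1a by simp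
  have ev: "poly (map_poly to_ac (min_poly lam)) mu = mu^2 - 2 * A * mu + Q" for mu
  proof -
    have "degree (min_poly lam) = 2" using d unfolding deg_over_def .
    moreover have "lead_coeff (min_poly lam) = 1" using min_poly_props[of lam] by blast
    ultimately have "poly (map_poly to_ac (min_poly lam)) mu = mu^2 + to_ac p1 * mu + to_ac p0"
      unfolding p1_def p0_def by (rule eval2)
    then show ?thesis unfolding P Q_def by simp
  qed
  have el: "lam^2 - 2 * A * lam + Q = 0" using ev[of lam] min_poly_props[of lam] by simp
  have il2: "invol lam = 2 * A - lam" unfolding il0 A_def ..
  have "{mu. poly (map_poly to_ac (min_poly lam)) mu = 0} - {lam} = {2 * A - lam}"
  proof (intro equalityI subsetI)
    fix mu assume "mu \<in> {mu. poly (map_poly to_ac (min_poly lam)) mu = 0} - {lam}"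
    then have m: "mu^2 - 2 * A * mu + Q = 0" "mu \<noteq> lam" using ev by auto
    have "(mu - lam) * (mu + lam - 2 * A) = (mu^2 - 2 * A * mu + Q) - (lam^2 - 2 * A * lam + Q)"
      by (simp add: algebra_simps power2_eq_square)
    also have "\<dots> = 0" using m(1) el by simp
    finally have "mu + lam - 2 * A = 0" using m(2) by simp
    then have "mu = 2 * A - lam" by (simp add: algebra_simps)
    then show "mu \<in> {2 * A - lam}" by simp
  next
    fix mu assume "mu \<in> {2 * A - lam}"
    then have mu: "mu = 2 * A - lam" by simp
    have "mu^2 - 2 * A * mu + Q = lam^2 - 2 * A * lam + Q"
      unfolding mu by (simp add: algebra_simps power2_eq_square)
    then have r: "poly (map_poly to_ac (min_poly lam)) mu = 0" using ev el by simp
    have "mu \<noteq> lam"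
    proof
      assume ml: "mu = lam"
      from ml mu have "2 * A - lam = lam" by metis
      then have "2 * A = lam + lam" by (simp only: diff_eq_eq)
      then have "2 * lam = 2 * A" unfolding mult_2 by (rule sym)
      then have "lam = A" by (simp only: mult_left_cancel[OF two'])
      then show False using lnK unfolding A_def by blast
    qed
    then show "mu \<in> {mu. poly (map_poly to_ac (min_poly lam)) mu = 0} - {lam}" using r by simp
  qed
  then show ?thesis using il il2 by simp
qed

lemma part_d:
  assumes ch: "CHAR('k::field) \<noteq> 2" and b1: "(\<beta>::'k alg_closure) \<in> KerH" and b2: "\<beta>' \<in> KerH"
    and d1: "deg_over \<beta> = 2" and d2: "deg_over \<beta>' = 2"
  shows "(\<beta> * \<beta>' \<in> range to_ac \<longleftrightarrow> lin_dep2 \<beta> \<beta>')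
        \<and> (\<not> lin_dep2 \<beta> \<beta>' \<longrightarrow> deg_over (\<beta> * \<beta>') = 2 \<and> \<beta> * \<beta>' \<in> KerH)"
proof -
  have e1: "\<beta> \<notin> range to_ac" "\<beta>^2 \<in> range to_ac" using part_e[OF ch d1] b1 by auto
  have e2: "\<beta>' \<notin> range to_ac" "\<beta>'^2 \<in> range to_ac" using part_e[OF ch d2] b2 by auto
  obtain c where c: "\<beta>^2 = to_ac c" using e1 by blast
  obtain c' where c': "\<beta>'^2 = to_ac c'" using e2 by blast
  have bnz: "\<beta> \<noteq> 0"
  proof
    assume "\<beta> = 0"
    then have "\<beta> = to_ac 0" by simp
    then show False using e1(1) by blast
  qed
  have cnz: "c \<noteq> 0"
  proof
    assume "c = 0"
    then have "\<beta>^2 = 0" using c by simp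
    then show False using bnz by simp
  qed
  have iff: "\<beta> * \<beta>' \<in> range to_ac \<longleftrightarrow> lin_dep2 \<beta> \<beta>'"
  proof
    assume "\<beta> * \<beta>' \<in> range to_ac"
    then obtain k where k: "\<beta> * \<beta>' = to_ac k" by blast
    have "to_ac k * \<beta> + to_ac (- c) * \<beta>' = (\<beta> * \<beta>') * \<beta> - \<beta>^2 * \<beta>'" unfolding k c by simp
    also have "\<dots> = 0" by (simp add: algebra_simps power2_eq_square)
    finally have eq0: "to_ac k * \<beta> + to_ac (- c) * \<beta>' = 0" .
    have "k \<noteq> 0 \<or> - c \<noteq> 0" using cnz by simp
    then show "lin_dep2 \<beta> \<beta>'" unfolding lin_dep2_def using eq0 by (intro exI[of _ k] exI[of _ "- c"]) simp
  next
    assume "lin_dep2 \<beta> \<beta>'"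
    then obtain a b :: 'k where ab: "a \<noteq> 0 \<or> b \<noteq> 0" "to_ac a * \<beta> + to_ac b * \<beta>' = 0"
      unfolding lin_dep2_def by blast
    have bn: "b \<noteq> 0"
    proof
      assume "b = 0"
      then have "to_ac a * \<beta> = 0" "a \<noteq> 0" using ab by auto
      then show False using bnz by simp
    qed
    have e1: "to_ac b * \<beta>' = - (to_ac a * \<beta>)" using ab(2) by (simp add: eq_neg_iff_add_eq_0 add.commute)
    have k: "b * (- a / b) = - a" using bn by simp
    then have k2: "to_ac b * to_ac (- a / b) = - to_ac a" by (metis to_ac_mult to_ac_minus)
    have "to_ac b * (to_ac (- a / b) * \<beta>) = (to_ac b * to_ac (- a / b)) * \<beta>" by (rule mult.assoc[symmetric])
    also have "\<dots> = - (to_ac a * \<beta>)" unfolding k2 by simp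
    finally have eqb: "to_ac b * \<beta>' = to_ac b * (to_ac (- a / b) * \<beta>)" using e1 by simp
    have nzb: "to_ac b \<noteq> 0" using bn by simp
    from eqb have b': "\<beta>' = to_ac (- a / b) * \<beta>" by (simp only: mult_left_cancel[OF nzb])
    have "\<beta> * \<beta>' = to_ac (- a / b) * \<beta>^2" unfolding b' power2_eq_square by (simp only: ac_simps)
    also have "\<dots> = to_ac (- a / b * c)" unfolding c by simp
    finally show "\<beta> * \<beta>' \<in> range to_ac" by blast
  qed
  have rest: "deg_over (\<beta> * \<beta>') = 2 \<and> \<beta> * \<beta>' \<in> KerH" if nd: "\<not> lin_dep2 \<beta> \<beta>'"
  proof (rule sq_ker[OF ch])
    show "\<beta> * \<beta>' \<notin> range to_ac" using iff nd by blast
    have "(\<beta> * \<beta>')^2 = to_ac (c * c')" unfolding power_mult_distrib c c' by simp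
    then show "(\<beta> * \<beta>')^2 \<in> range to_ac" by blast
  qed
  show ?thesis using iff rest by blast
qed

theorem proposition1p12:
  assumes char: "CHAR('k :: field) \<noteq> 2"
  shows
   "(\<forall>(\<alpha>::'k) \<beta> lam. \<beta> \<in> KerH \<and> lam = to_ac \<alpha> + \<beta> \<and> deg_over lam = 2 \<longrightarrow>
        {mu. poly (map_poly to_ac (min_poly lam)) mu = 0} - {lam} = {invol lam}
        \<and> invol lam = to_ac \<alpha> - \<beta>)
    \<and> (\<forall>(th :: nat \<Rightarrow> 'k alg_closure) n. (\<forall>i<n. deg_over (th i) \<le> 2) \<longrightarrow>
        gen_field (th ` {..<n}) \<subseteq> {x. regular x}
        \<and> invol (\<Sum>i<n. th i) = (\<Sum>i<n. invol (th i)))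
    \<and> (\<forall>lam :: 'k alg_closure. deg_over lam \<le> 2 \<longrightarrow>
        (\<forall>x\<in>gen_field {lam}. \<forall>y\<in>gen_field {lam}. invol (x * y) = invol x * invol y))
    \<and> (\<forall>\<beta> \<beta>' :: 'k alg_closure. \<beta> \<in> KerH \<and> \<beta>' \<in> KerH \<and> deg_over \<beta> = 2 \<and> deg_over \<beta>' = 2 \<longrightarrow>
        (\<beta> * \<beta>' \<in> range to_ac \<longleftrightarrow> lin_dep2 \<beta> \<beta>')
        \<and> (\<not> lin_dep2 \<beta> \<beta>' \<longrightarrow> deg_over (\<beta> * \<beta>') = 2 \<and> \<beta> * \<beta>' \<in> KerH))
    \<and> (\<forall>\<beta> :: 'k alg_closure. deg_over \<beta> = 2 \<longrightarrow>
        (\<beta> \<in> KerH \<longleftrightarrow> \<beta> \<notin> range to_ac \<and> \<beta>^2 \<in> range to_ac))"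
proof (intro conjI allI impI)
  fix \<alpha> :: 'k and \<beta> lam
  assume h: "\<beta> \<in> KerH \<and> lam = to_ac \<alpha> + \<beta> \<and> deg_over lam = 2"
  show "{mu. poly (map_poly to_ac (min_poly lam)) mu = 0} - {lam} = {invol lam}"
    using part_a[OF char] h by blast
  show "invol lam = to_ac \<alpha> - \<beta>" using part_a[OF char] h by blast
next
  fix th :: "nat \<Rightarrow> 'k alg_closure" and n :: nat
  assume h: "\<forall>i<n. deg_over (th i) \<le> 2"
  show "gen_field (th ` {..<n}) \<subseteq> {x. regular x}" using part_b[OF char h] by blast
  show "invol (\<Sum>i<n. th i) = (\<Sum>i<n. invol (th i))" using part_b[OF char h] by blast
next
  fix lam :: "'k alg_closure" assume "deg_over lam \<le> 2"
  then show "\<forall>x\<in>gen_field {lam}. \<forall>y\<in>gen_field {lam}. invol (x * y) = invol x * invol y"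
    by (rule part_c[OF char])
next
  fix \<beta> \<beta>' :: "'k alg_closure"
  assume h: "\<beta> \<in> KerH \<and> \<beta>' \<in> KerH \<and> deg_over \<beta> = 2 \<and> deg_over \<beta>' = 2"
  show "\<beta> * \<beta>' \<in> range to_ac \<longleftrightarrow> lin_dep2 \<beta> \<beta>'" using part_d[OF char] h by blast
  show "\<not> lin_dep2 \<beta> \<beta>' \<Longrightarrow> deg_over (\<beta> * \<beta>') = 2" using part_d[OF char] h by blast
  show "\<not> lin_dep2 \<beta> \<beta>' \<Longrightarrow> \<beta> * \<beta>' \<in> KerH" using part_d[OF char] h by blast
next
  fix \<beta> :: "'k alg_closure" assume "deg_over \<beta> = 2"
  then show "\<beta> \<in> KerH \<longleftrightarrow> \<beta> \<notin> range to_ac \<and> \<beta>^2 \<in> range to_ac" by (rule part_e[OF char])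
qed


end
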